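(* Let $\omega>0$ be fixed and, for a time step $\tau>0$, set $\sigma=\sigma(\tau)=\omega\sqrt{\tau}$. Let $w:\mathbb{R}\to\mathbb{R}$ (the weighting function, depending on fixed parameters $\bm\theta$) be continuous and bounded away from zero, i.e. there exist constants $L,U$ with $0<L\le w(x)\le U$ for all $x\in\mathbb{R}$, and let $w$ be twice differentiable with bounded second derivative. For $x,y\in\mathbb{R}$ and $s>0$ define $$p_1(x\mid y,s,\bm\theta)=\frac{k_s(x;y)\,w(x)}{\int_{\mathbb{R}}k_s(z;y)\,w(z)\,\mathrm{d}z},\qquad p_2(x\mid y,s,\bm\theta)=\int_{\mathbb{R}}p_1(x\mid z,s,\bm\theta)\,p_1(z\mid y,s,\bm\theta)\,\mathrm{d}z,$$ where $k_s(\cdot;y)$ is the Gaussian density with mean $y$ and standard deviation $s$. Then the model is asymptotically robust of degree 2 with parameter transformation $g_2(\sigma,\bm\theta)=(\sqrt2\,\sigma,\bm\theta)$: writing $$p_2(x\mid y,\sigma(\tau),\bm\theta)=p_1(x\mid y,\sqrt2\,\sigma(\tau),\bm\theta)\,v(x,y;\tau),$$ there is a constant $C>0$ such that $|v(x,y;\tau)-1|\le C\tau$ for all $x,y\in\mathbb{R}$ and all $\tau>0$.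
   Context: The setting is a one-dimensional discrete-time Markov movement model with time step $\tau$, whose one-step transition density is a Gaussian movement kernel (standard deviation $\sigma(\tau)=\omega\sqrt\tau$) multiplied by a positive weighting function and renormalized. Asymptotic robustness of degree $n$ means: there is an injective parameter map $g_n$ and a function $v(x,y;\tau)>0$ with $v-1=\mathcal{O}(\tau)$ uniformly on $\mathbb{R}^2\times(0,\infty)$ such that $p_n(x\mid y,\bm\theta)=p_1(x\mid y,g_n(\bm\theta))\,v(x,y;\tau)$. *)

theory Defs
  imports "HOL-Probability.Probability"
begin

definition p1 :: "(real \<Rightarrow> real) \<Rightarrow> real \<Rightarrow> real \<Rightarrow> real \<Rightarrow> real" where
  "p1 w s x y =
     normal_density y s x * w x / (\<integral>z. normal_density y s z * w z \<partial>lborel)"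

definition p2 :: "(real \<Rightarrow> real) \<Rightarrow> real \<Rightarrow> real \<Rightarrow> real \<Rightarrow> real" where
  "p2 w s x y = (\<integral>z. p1 w s x z * p1 w s z y \<partial>lborel)"

end

theory Submission
  imports Defs
begin

lemma taylor2:
  fixes w w' w'' :: "real \<Rightarrow> real"
  assumes d1: "\<And>x. (w has_real_derivative w' x) (at x)"
    and d2: "\<And>x. (w' has_real_derivative w'' x) (at x)"
    and M: "\<And>x. \<bar>w'' x\<bar> \<le> M"
  shows "\<bar>w b - w a - w' a * (b - a)\<bar> \<le> M / 2 * (b - a)^2"
proof (cases "b = a")
  case True then show ?thesis by simp
next
  case False
  define diff where "diff = (\<lambda>n::nat. if n = 0 then w else if n = 1 then w' else w'')"
  have "\<exists>t. (if b < a then b < t \<and> t < a else a < t \<and> t < b) \<and>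
    w b = (\<Sum>m<2. (diff m a / fact m) * (b - a)^m) + (diff 2 t / fact 2) * (b - a)^2"
    apply (rule Taylor[where a="min a b" and b="max a b"])
    using False d1 d2 by (auto simp: diff_def less_2_cases_iff)
  then obtain t where "w b = (\<Sum>m<2. (diff m a / fact m) * (b - a)^m) + (diff 2 t / fact 2) * (b - a)^2"
    by blast
  then have "w b - w a - w' a * (b - a) = w'' t / 2 * (b - a)^2"
    by (simp add: diff_def numeral_2_eq_2)
  also have "\<bar>\<dots>\<bar> \<le> M / 2 * (b - a)^2"
    using M[of t] by (simp add: abs_mult mult_right_mono)
  finally show ?thesis .
qed

lemma gauss_prod:
  assumes s: "s > 0"
  shows "normal_density z s x * normal_density y s z =
    normal_density y (sqrt 2 * s) x * normal_density ((x + y) / 2) (s / sqrt 2) z"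
proof -
  have e: "-(x - z)\<^sup>2 / (2 * s\<^sup>2) + -(z - y)\<^sup>2 / (2 * s\<^sup>2) =
        -(x - y)\<^sup>2 / (2 * (sqrt 2 * s)\<^sup>2) + -(z - (x + y) / 2)\<^sup>2 / (2 * (s / sqrt 2)\<^sup>2)"
    using s by (simp add: power_mult_distrib power_divide field_simps power2_eq_square)
  have c: "1 / sqrt (2 * pi * s\<^sup>2) * (1 / sqrt (2 * pi * s\<^sup>2)) =
        1 / sqrt (2 * pi * (sqrt 2 * s)\<^sup>2) * (1 / sqrt (2 * pi * (s / sqrt 2)\<^sup>2))"
  proof -
    have "sqrt (2 * pi * (sqrt 2 * s)\<^sup>2) * sqrt (2 * pi * (s / sqrt 2)\<^sup>2) = sqrt (2 * pi * s\<^sup>2) * sqrt (2 * pi * s\<^sup>2)"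
      unfolding real_sqrt_mult[symmetric] by (simp add: power_mult_distrib power_divide)
    then show ?thesis by (simp add: field_simps)
  qed
  have ex: "exp (-(x - z)\<^sup>2 / (2 * s\<^sup>2)) * exp (-(z - y)\<^sup>2 / (2 * s\<^sup>2)) =
     exp (-(x - y)\<^sup>2 / (2 * (sqrt 2 * s)\<^sup>2)) * exp (-(z - (x + y) / 2)\<^sup>2 / (2 * (s / sqrt 2)\<^sup>2))"
    unfolding mult_exp_exp e ..
  have "normal_density z s x * normal_density y s z =
     (1 / sqrt (2 * pi * s\<^sup>2) * (1 / sqrt (2 * pi * s\<^sup>2))) *
     (exp (-(x - z)\<^sup>2 / (2 * s\<^sup>2)) * exp (-(z - y)\<^sup>2 / (2 * s\<^sup>2)))"
    unfolding normal_density_def by (simp add: power2_commute[of z x])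
  also have "\<dots> = (1 / sqrt (2 * pi * (sqrt 2 * s)\<^sup>2) * (1 / sqrt (2 * pi * (s / sqrt 2)\<^sup>2))) *
     (exp (-(x - y)\<^sup>2 / (2 * (sqrt 2 * s)\<^sup>2)) * exp (-(z - (x + y) / 2)\<^sup>2 / (2 * (s / sqrt 2)\<^sup>2)))"
    unfolding c ex ..
  also have "\<dots> = normal_density y (sqrt 2 * s) x * normal_density ((x + y) / 2) (s / sqrt 2) z"
    unfolding normal_density_def by (simp only: mult_ac)
  finally show ?thesis .
qed

lemma int_bounds:
  fixes f :: "real \<Rightarrow> real"
  assumes s: "s > 0" and f: "f \<in> borel_measurable borel"
    and lo: "\<And>z. a \<le> f z" and hi: "\<And>z. f z \<le> b"
  shows "integrable lborel (\<lambda>z. normal_density m s z * f z)"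
    and "a \<le> (\<integral>z. normal_density m s z * f z \<partial>lborel)"
    and "(\<integral>z. normal_density m s z * f z \<partial>lborel) \<le> b"
proof -
  have fl: "f \<in> borel_measurable lborel" using f by simp
  show int: "integrable lborel (\<lambda>z. normal_density m s z * f z)"
  proof (rule Bochner_Integration.integrable_bound[where f="\<lambda>z. normal_density m s z * (\<bar>a\<bar> + \<bar>b\<bar>)"])
    show "integrable lborel (\<lambda>z. normal_density m s z * (\<bar>a\<bar> + \<bar>b\<bar>))" using s by simp
    show "(\<lambda>z. normal_density m s z * f z) \<in> borel_measurable lborel" using fl by measurable
    show "AE z in lborel. norm (normal_density m s z * f z) \<le> norm (normal_density m s z * (\<bar>a\<bar> + \<bar>b\<bar>))"
    proof (intro AE_I2)
      fix z
      have "\<bar>f z\<bar> \<le> \<bar>a\<bar> + \<bar>b\<bar>" using lo[of z] hi[of z] by linarith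
      then show "norm (normal_density m s z * f z) \<le> norm (normal_density m s z * (\<bar>a\<bar> + \<bar>b\<bar>))"
        by (simp add: abs_mult mult_left_mono)
    qed
  qed
  have "(\<integral>z. normal_density m s z * a \<partial>lborel) \<le> (\<integral>z. normal_density m s z * f z \<partial>lborel)"
    by (rule integral_mono) (use int lo s in \<open>auto intro: mult_left_mono\<close>)
  then show "a \<le> (\<integral>z. normal_density m s z * f z \<partial>lborel)" using s by simp
  have "(\<integral>z. normal_density m s z * f z \<partial>lborel) \<le> (\<integral>z. normal_density m s z * b \<partial>lborel)"
    by (rule integral_mono) (use int hi s in \<open>auto intro: mult_left_mono\<close>)
  then show "(\<integral>z. normal_density m s z * f z \<partial>lborel) \<le> b" using s by simp
qed

lemma W_taylor:
  fixes w w' w'' :: "real \<Rightarrow> real"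
  assumes s: "s > 0"
    and wm: "w \<in> borel_measurable borel"
    and lo: "\<And>x. L \<le> w x" and hi: "\<And>x. w x \<le> U"
    and d1: "\<And>x. (w has_real_derivative w' x) (at x)"
    and d2: "\<And>x. (w' has_real_derivative w'' x) (at x)"
    and M: "\<And>x. \<bar>w'' x\<bar> \<le> M"
  shows "\<bar>(\<integral>z. normal_density y s z * w z \<partial>lborel) - w y\<bar> \<le> M / 2 * s\<^sup>2"
proof -
  have i1: "integrable lborel (\<lambda>z. normal_density y s z * w z)"
    using int_bounds(1)[OF s wm lo hi] .
  have i2: "integrable lborel (\<lambda>z. normal_density y s z * (z - y))"
    using integrable_normal_moment[OF s, of y 1] by simp
  have m1: "(\<integral>z. normal_density y s z * (z - y) \<partial>lborel) = 0"
    using integral_normal_moment_odd[OF s, of y 0] by simp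
  have i3: "integrable lborel (\<lambda>z. normal_density y s z * (z - y)^2)"
    using integrable_normal_moment[OF s, of y 2] by simp
  have m2: "(\<integral>z. normal_density y s z * (z - y)^2 \<partial>lborel) = s\<^sup>2"
    using integral_normal_moment_even[OF s, of y 1] by simp
  define g where "g z = normal_density y s z * w z - w y * normal_density y s z - w' y * (normal_density y s z * (z - y))" for z
  have ig: "integrable lborel g" unfolding g_def using i1 i2 s
    by (intro Bochner_Integration.integrable_diff integrable_mult_right) auto
  have "(\<integral>z. g z \<partial>lborel) = (\<integral>z. normal_density y s z * w z \<partial>lborel) - w y"
    unfolding g_def using i1 i2 m1 s
    by (subst Bochner_Integration.integral_diff; (intro Bochner_Integration.integrable_diff integrable_mult_right)?; auto)+
  moreover have "\<bar>\<integral>z. g z \<partial>lborel\<bar> \<le> (\<integral>z. \<bar>g z\<bar> \<partial>lborel)"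
    by (rule integral_abs_bound)
  moreover have "(\<integral>z. \<bar>g z\<bar> \<partial>lborel) \<le> (\<integral>z. M / 2 * (normal_density y s z * (z - y)^2) \<partial>lborel)"
  proof (rule integral_mono)
    show "integrable lborel (\<lambda>z. \<bar>g z\<bar>)" using ig by auto
    show "integrable lborel (\<lambda>z. M / 2 * (normal_density y s z * (z - y)^2))" using i3 by auto
    fix z
    have "g z = normal_density y s z * (w z - w y - w' y * (z - y))"
      unfolding g_def by (simp add: algebra_simps)
    then have "\<bar>g z\<bar> = normal_density y s z * \<bar>w z - w y - w' y * (z - y)\<bar>"
      by (simp add: abs_mult)
    also have "\<dots> \<le> normal_density y s z * (M / 2 * (z - y)^2)"
      by (rule mult_left_mono[OF taylor2[OF d1 d2 M]]) simp
    finally show "\<bar>g z\<bar> \<le> M / 2 * (normal_density y s z * (z - y)^2)" by (simp add: algebra_simps)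
  qed
  moreover have "(\<integral>z. M / 2 * (normal_density y s z * (z - y)^2) \<partial>lborel) = M / 2 * s\<^sup>2"
    using m2 by simp
  ultimately show ?thesis by linarith
qed

lemma W_meas:
  fixes w :: "real \<Rightarrow> real"
  assumes wm: "w \<in> borel_measurable borel"
  shows "(\<lambda>y. \<integral>z. normal_density y s z * w z \<partial>lborel) \<in> borel_measurable borel"
proof -
  have "(\<lambda>y. \<integral>z. normal_density y s z * w z \<partial>lborel) \<in> borel_measurable lborel"
    unfolding normal_density_def using wm by measurable
  then show ?thesis by simp
qed

lemma ratio_arith:
  fixes R q e d K :: real
  assumes "\<bar>R - 1\<bar> \<le> e" "0 \<le> q" "q \<le> K" "\<bar>q - 1\<bar> \<le> d"
  shows "\<bar>R * q - 1\<bar> \<le> e * K + d"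
proof -
  have "R * q - 1 = (R - 1) * q + (q - 1)" by (simp add: algebra_simps)
  moreover have "\<bar>(R - 1) * q\<bar> \<le> e * K"
    using assms by (simp add: abs_mult) (metis abs_ge_zero mult_mono order_trans)
  ultimately show ?thesis using assms by linarith
qed

theorem theorem3:
  fixes \<omega> L U M :: real and w w' w'' :: "real \<Rightarrow> real"
  assumes "\<omega> > 0"
    and "continuous_on UNIV w"
    and "0 < L" and "\<And>x. L \<le> w x" and "\<And>x. w x \<le> U"
    and "\<And>x. (w has_real_derivative w' x) (at x)"
    and "\<And>x. (w' has_real_derivative w'' x) (at x)"
    and "\<And>x. \<bar>w'' x\<bar> \<le> M"
  shows "\<exists>C>0. \<forall>x y \<tau>. \<tau> > 0 \<longrightarrow>
           \<bar>p2 w (\<omega> * sqrt \<tau>) x y / p1 w (sqrt 2 * (\<omega> * sqrt \<tau>)) x y - 1\<bar> \<le> C * \<tau>"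
proof -
  note om = assms(1) and L0 = assms(3) and lo = assms(4) and hi = assms(5)
    and d1 = assms(6) and d2 = assms(7) and Mb = assms(8)
  have wm: "w \<in> borel_measurable borel" using assms(2) by (rule borel_measurable_continuous_onI)
  have M0: "0 \<le> M" using Mb[of 0] by linarith
  have LU: "L \<le> U" using lo[of 0] hi[of 0] by linarith
  define W where "W s y = (\<integral>z. normal_density y s z * w z \<partial>lborel)" for s y
  have Wlo: "L \<le> W s y" if "s > 0" for s y
    unfolding W_def by (rule int_bounds(2)[OF that wm lo hi])
  have Whi: "W s y \<le> U" if "s > 0" for s y
    unfolding W_def by (rule int_bounds(3)[OF that wm lo hi])
  have Wt: "\<bar>W s y - w y\<bar> \<le> M / 2 * s\<^sup>2" if "s > 0" for s y
    unfolding W_def by (rule W_taylor[OF that wm lo hi d1 d2 Mb])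
  have Wmeas: "W s \<in> borel_measurable borel" for s
    using W_meas[OF wm, of s] unfolding W_def[abs_def] .
  define C where "C = \<omega>\<^sup>2 * M / (2 * L) * (U / L) + 3 * \<omega>\<^sup>2 * M / (2 * L) + 1"
  have Cpos: "C > 0" unfolding C_def using L0 M0 LU
    by (intro add_nonneg_pos add_nonneg_nonneg mult_nonneg_nonneg divide_nonneg_nonneg) auto
  show ?thesis
  proof (intro exI[of _ C] conjI allI impI Cpos)
    fix x y \<tau> :: real
    assume tau: "\<tau> > 0"
    define s where "s = \<omega> * sqrt \<tau>"
    have s0: "s > 0" unfolding s_def using om tau by simp
    have s2: "s\<^sup>2 = \<omega>\<^sup>2 * \<tau>" unfolding s_def using tau by (simp add: power_mult_distrib)
    have s20: "sqrt 2 * s > 0" using s0 by simp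
    have s30: "s / sqrt 2 > 0" using s0 by simp
    define m where "m = (x + y) / 2"
    define K where "K = normal_density y (sqrt 2 * s) x"
    have K0: "K > 0" unfolding K_def using s20 by (rule normal_density_pos)
    define e where "e = M * s\<^sup>2 / (2 * L)"
    define r where "r z = w z / W s z" for z
    have Wpos: "W t z > 0" if "t > 0" for t z using Wlo[OF that, of z] L0 by linarith
    have rb: "\<bar>r z - 1\<bar> \<le> e" for z
    proof -
      have "r z - 1 = (w z - W s z) / W s z" unfolding r_def using Wpos[OF s0, of z] by (simp add: field_simps)
      then have "\<bar>r z - 1\<bar> = \<bar>W s z - w z\<bar> / W s z" using Wpos[OF s0, of z] by (simp add: abs_minus_commute)
      also have "\<dots> \<le> (M / 2 * s\<^sup>2) / L"
        using Wt[OF s0, of z] Wlo[OF s0, of z] L0 M0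
        by (intro frac_le) auto
      finally show ?thesis unfolding e_def by simp
    qed
    have rlo: "1 - e \<le> r z" and rhi: "r z \<le> 1 + e" for z using rb[of z] by linarith+
    have rm: "r \<in> borel_measurable borel" unfolding r_def[abs_def] using wm Wmeas[of s] by measurable
    define R where "R = (\<integral>z. normal_density m (s / sqrt 2) z * r z \<partial>lborel)"
    have Rlo: "1 - e \<le> R" unfolding R_def
      by (rule int_bounds(2)[OF s30 rm, where b="1 + e"]) (use rlo rhi in auto)
    have Rhi: "R \<le> 1 + e" unfolding R_def
      by (rule int_bounds(3)[OF s30 rm, where a="1 - e"]) (use rlo rhi in auto)
    have p2eq: "p2 w s x y = w x / W s y * K * R"
    proof -
      have "p2 w s x y = (\<integral>z. (w x / W s y * K) * (normal_density m (s / sqrt 2) z * r z) \<partial>lborel)"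
        unfolding p2_def p1_def W_def[symmetric]
      proof (rule Bochner_Integration.integral_cong[OF refl])
        fix z
        have g: "normal_density z s x * normal_density y s z = K * normal_density m (s / sqrt 2) z"
          unfolding K_def m_def by (rule gauss_prod[OF s0])
        have "normal_density z s x * w x / W s z * (normal_density y s z * w z / W s y)
          = (normal_density z s x * normal_density y s z) * (w x / W s y) * (w z / W s z)"
          by (simp add: field_simps)
        also have "\<dots> = w x / W s y * K * (normal_density m (s / sqrt 2) z * r z)"
          unfolding g r_def by (simp add: algebra_simps)
        finally show "normal_density z s x * w x / W s z * (normal_density y s z * w z / W s y)
          = w x / W s y * K * (normal_density m (s / sqrt 2) z * r z)" .
      qed
      also have "\<dots> = w x / W s y * K * R" unfolding R_def by simp
      finally show ?thesis .
    qed
    have p1eq: "p1 w (sqrt 2 * s) x y = K * w x / W (sqrt 2 * s) y"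
      unfolding p1_def W_def K_def ..
    define q where "q = W (sqrt 2 * s) y / W s y"
    have wx0: "w x > 0" using lo[of x] L0 by linarith
    have ratio: "p2 w s x y / p1 w (sqrt 2 * s) x y = R * q"
      unfolding p2eq p1eq q_def using K0 wx0 Wpos[OF s0, of y] Wpos[OF s20, of y]
      by (simp add: field_simps)
    have q0: "0 \<le> q" unfolding q_def using Wpos[OF s0, of y] Wpos[OF s20, of y] by simp
    have qU: "q \<le> U / L" unfolding q_def
      using Whi[OF s20, of y] Wlo[OF s0, of y] L0 Wpos[OF s20, of y] by (intro frac_le) auto
    have q1: "\<bar>q - 1\<bar> \<le> 3 * M * s\<^sup>2 / (2 * L)"
    proof -
      have "q - 1 = (W (sqrt 2 * s) y - W s y) / W s y" unfolding q_def using Wpos[OF s0, of y]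
        by (simp add: field_simps)
      then have "\<bar>q - 1\<bar> = \<bar>W (sqrt 2 * s) y - W s y\<bar> / W s y" using Wpos[OF s0, of y] by simp
      also have "\<dots> \<le> (3 * M * s\<^sup>2 / 2) / L"
      proof (intro frac_le)
        have a: "\<bar>W (sqrt 2 * s) y - w y\<bar> \<le> M / 2 * (sqrt 2 * s)\<^sup>2" by (rule Wt[OF s20])
        have "(sqrt 2 * s)\<^sup>2 = 2 * s\<^sup>2" by (simp add: power_mult_distrib)
        then show "\<bar>W (sqrt 2 * s) y - W s y\<bar> \<le> 3 * M * s\<^sup>2 / 2"
        proof -
          have a': "\<bar>W (sqrt 2 * s) y - w y\<bar> \<le> M * s\<^sup>2" using a \<open>(sqrt 2 * s)\<^sup>2 = 2 * s\<^sup>2\<close> by simp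
          have b: "\<bar>W s y - w y\<bar> \<le> M / 2 * s\<^sup>2" by (rule Wt[OF s0])
          show ?thesis using a' b unfolding abs_le_iff by linarith
        qed
      qed (use M0 L0 Wlo[OF s0, of y] in auto)
      finally show ?thesis by simp
    qed
    have "\<bar>R * q - 1\<bar> \<le> e * (U / L) + 3 * M * s\<^sup>2 / (2 * L)"
      by (rule ratio_arith) (use Rlo Rhi q0 qU q1 in auto)
    also have "\<dots> = (C - 1) * \<tau>" unfolding e_def C_def s2 by (simp add: field_simps)
    also have "\<dots> \<le> C * \<tau>" using tau by simp
    finally show "\<bar>p2 w (\<omega> * sqrt \<tau>) x y / p1 w (sqrt 2 * (\<omega> * sqrt \<tau>)) x y - 1\<bar> \<le> C * \<tau>"
      using ratio unfolding s_def by simp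
  qed
qed

end
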